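(* Let $X$ be a complex manifold, $\omega$ a Hermitian metric and $\gamma$ a smooth real $(1,1)$-form on $X$. For any bidegree $(p,q)$ and any $C^\infty$ family $(\alpha_t)_{t\in(-\varepsilon,\varepsilon)}$ of smooth $(p,q)$-forms, with $\varepsilon>0$ so small that $\omega+t\gamma>0$ for all $t\in(-\varepsilon,\varepsilon)$, $$\frac{d}{dt}\Big|_{t=0}\big(\Lambda_{\omega+t\gamma}\alpha_t\big)=\Lambda_\omega\Big(\frac{d\alpha_t}{dt}\Big|_{t=0}\Big)-(\gamma\wedge\cdot)^\star_\omega\,\alpha_0.$$
   Context: Hermitian metrics are smooth positive definite real $(1,1)$-forms. For a Hermitian metric $\rho$, $\Lambda_\rho$ is the adjoint of $\rho\wedge\cdot$ with respect to the pointwise inner product induced by $\rho$; $(\gamma\wedge\cdot)^\star_\omega$ is the adjoint of multiplication by $\gamma$ with respect to the pointwise inner product induced by $\omega$. *)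

theory Defs
  imports "HOL-Analysis.Analysis"
begin

text \<open>Pointwise model of complex-valued differential forms at a point of an
n-dimensional complex manifold, in holomorphic coordinates z_1..z_n
(indexed by the finite linearly ordered type 'n).  The complexified
cotangent space has basis dz_j (Inl j) and d(conj z_j) (Inr j).
A form is given by its coefficients on the basis e_A = wedge of the
elements of A in increasing order (order idx_less below).\<close>

type_synonym 'n form = "('n + 'n) set \<Rightarrow> complex"

definition idx_less :: "('n::linorder + 'n) \<Rightarrow> ('n + 'n) \<Rightarrow> bool" where
  "idx_less x y = (case (x, y) of
      (Inl a, Inl b) \<Rightarrow> a < b
    | (Inl a, Inr b) \<Rightarrow> True
    | (Inr a, Inl b) \<Rightarrow> False
    | (Inr a, Inr b) \<Rightarrow> a < b)"

definition bsign :: "(('n::linorder + 'n) \<Rightarrow> ('n + 'n)) \<Rightarrow> ('n + 'n) set \<Rightarrow> complex" where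
  "bsign f A = (-1) ^ card {(a, a'). a \<in> A \<and> a' \<in> A \<and> idx_less a a' \<and> idx_less (f a') (f a)}"

text \<open>Sign of sorting the concatenation (A in order, then B in order).\<close>
definition shuffle_sign :: "('n::linorder + 'n) set \<Rightarrow> ('n + 'n) set \<Rightarrow> complex" where
  "shuffle_sign A B = (-1) ^ card {(a, b). a \<in> A \<and> b \<in> B \<and> idx_less b a}"

definition wedge :: "('n::{finite,linorder}) form \<Rightarrow> 'n form \<Rightarrow> 'n form" where
  "wedge \<alpha> \<beta> C = (\<Sum>A\<in>Pow C. shuffle_sign A (C - A) * \<alpha> A * \<beta> (C - A))"

definition bideg :: "nat \<Rightarrow> nat \<Rightarrow> ('n::{finite,linorder}) form \<Rightarrow> bool" where
  "bideg p q \<alpha> \<longleftrightarrow> (\<forall>A. \<alpha> A \<noteq> 0 \<longrightarrow>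
      card {j. Inl j \<in> A} = p \<and> card {j. Inr j \<in> A} = q)"

definition swap_idx :: "('n + 'n) \<Rightarrow> ('n + 'n)" where
  "swap_idx x = (case x of Inl a \<Rightarrow> Inr a | Inr a \<Rightarrow> Inl a)"

text \<open>Complex conjugation of forms: conj(dz_j) = d(conj z_j).\<close>
definition conj_form :: "('n::{finite,linorder}) form \<Rightarrow> 'n form" where
  "conj_form \<alpha> B = cnj (\<alpha> (swap_idx ` B)) * bsign swap_idx (swap_idx ` B)"

definition real_11_form :: "('n::{finite,linorder}) form \<Rightarrow> bool" where
  "real_11_form \<gamma> \<longleftrightarrow> bideg 1 1 \<gamma> \<and> conj_form \<gamma> = \<gamma>"

text \<open>Coefficient matrix h of a (1,1)-form written i * sum h_jk dz_j wedge d(conj z_k).\<close>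
definition coef_mat :: "('n::{finite,linorder}) form \<Rightarrow> complex ^ ('n::{finite,linorder}) ^ ('n::{finite,linorder})" where
  "coef_mat \<omega> = (\<chi> j k. - \<i> * \<omega> {Inl j, Inr k})"

definition hermitian_metric :: "('n::{finite,linorder}) form \<Rightarrow> bool" where
  "hermitian_metric \<omega> \<longleftrightarrow> real_11_form \<omega> \<and>
     (\<forall>v::complex ^ ('n::{finite,linorder}). v \<noteq> 0 \<longrightarrow>
        0 < Re (\<Sum>j\<in>UNIV. \<Sum>k\<in>UNIV. coef_mat \<omega> $ j $ k * v $ j * cnj (v $ k)))"

text \<open>Pointwise Hermitian inner product (linear in the first slot) induced by
\<omega> on 1-forms: <dz_j,dz_k> = (h^{-1})_{kj}, <dzbar_j,dzbar_k> = (h^{-1})_{jk},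
<dz_j,dzbar_k> = 0; extended to all degrees by the determinant formula.\<close>
definition dual_gram :: "('n::{finite,linorder}) form \<Rightarrow> ('n + 'n) \<Rightarrow> ('n + 'n) \<Rightarrow> complex" where
  "dual_gram \<omega> x y = (let M = matrix_inv (coef_mat \<omega>) in
     (case (x, y) of
        (Inl j, Inl k) \<Rightarrow> M $ k $ j
      | (Inr j, Inr k) \<Rightarrow> M $ j $ k
      | _ \<Rightarrow> 0))"

definition bijs :: "('n + 'n) set \<Rightarrow> ('n + 'n) set \<Rightarrow> (('n + 'n) \<Rightarrow> ('n + 'n)) set" where
  "bijs A B = {f. bij_betw f A B \<and> (\<forall>x. x \<notin> A \<longrightarrow> f x = undefined)}"

definition basis_ip :: "('n::{finite,linorder}) form \<Rightarrow> ('n + 'n) set \<Rightarrow> ('n + 'n) set \<Rightarrow> complex" where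
  "basis_ip \<omega> A B = (\<Sum>f\<in>bijs A B. bsign f A * (\<Prod>a\<in>A. dual_gram \<omega> a (f a)))"

definition form_ip :: "('n::{finite,linorder}) form \<Rightarrow> 'n form \<Rightarrow> 'n form \<Rightarrow> complex" where
  "form_ip \<omega> \<alpha> \<beta> = (\<Sum>A\<in>UNIV. \<Sum>B\<in>UNIV. \<alpha> A * cnj (\<beta> B) * basis_ip \<omega> A B)"

definition form_adj :: "('n::{finite,linorder}) form \<Rightarrow> ('n form \<Rightarrow> 'n form) \<Rightarrow> 'n form \<Rightarrow> 'n form" where
  "form_adj \<omega> T \<beta> = (THE y. \<forall>x. form_ip \<omega> (T x) \<beta> = form_ip \<omega> x y)"

definition Lambda_op :: "('n::{finite,linorder}) form \<Rightarrow> 'n form \<Rightarrow> 'n form" where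
  "Lambda_op \<rho> = form_adj \<rho> (wedge \<rho>)"

definition form_add_smult :: "('n::{finite,linorder}) form \<Rightarrow> real \<Rightarrow> 'n form \<Rightarrow> 'n form" where
  "form_add_smult \<omega> t \<gamma> = (\<lambda>A. \<omega> A + complex_of_real t * \<gamma> A)"

definition smooth_on :: "real set \<Rightarrow> (real \<Rightarrow> complex) \<Rightarrow> bool" where
  "smooth_on I f \<longleftrightarrow> (\<exists>D::nat \<Rightarrow> real \<Rightarrow> complex. D 0 = f \<and>
      (\<forall>k. \<forall>t\<in>I. (D k has_vector_derivative D (Suc k) t) (at t)))"

end

theory Submission
  imports Defs "HOL-Analysis.Analysis"
begin


lemma il_irrefl[simp]: "\<not> idx_less x x"
  by (auto simp: idx_less_def split: sum.splits)
lemma il_trans: "idx_less x y \<Longrightarrow> idx_less y z \<Longrightarrow> idx_less x z"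
  by (auto simp: idx_less_def split: sum.splits)
lemma il_asym: "idx_less x y \<Longrightarrow> \<not> idx_less y x"
  by (auto simp: idx_less_def split: sum.splits)
lemma il_total: "x \<noteq> y \<Longrightarrow> idx_less x y \<or> idx_less y x"
  by (auto simp: idx_less_def split: sum.splits)
lemma il_LR[simp]: "idx_less (Inl a) (Inr b)" "\<not> idx_less (Inr b) (Inl a)"
  by (auto simp: idx_less_def)

definition posn :: "('n::linorder + 'n) \<Rightarrow> ('n + 'n) set \<Rightarrow> nat" where
  "posn a A = card {x\<in>A. idx_less x a}"

lemma bsign_cong: "(\<And>x. x \<in> A \<Longrightarrow> f x = g x) \<Longrightarrow> bsign f A = bsign g A"
  unfolding bsign_def by (rule arg_cong[where f="\<lambda>k. (-1)^card k"]) auto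

lemma bsign_insert:
  fixes f :: "('n::{finite,linorder} + 'n) \<Rightarrow> ('n + 'n)"
  assumes aA: "a \<notin> A" and inj: "inj_on f (insert a A)"
  shows "bsign f (insert a A) = bsign f A * (-1) ^ (posn a A + card {x\<in>A. idx_less (f x) (f a)})"
proof -
  define S where "S = {(x, y). x \<in> insert a A \<and> y \<in> insert a A \<and> idx_less x y \<and> idx_less (f y) (f x)}"
  define S0 where "S0 = {(x, y). x \<in> A \<and> y \<in> A \<and> idx_less x y \<and> idx_less (f y) (f x)}"
  define P where "P = {y\<in>A. idx_less a y \<and> idx_less (f y) (f a)}"
  define Q where "Q = {x\<in>A. idx_less x a \<and> idx_less (f a) (f x)}"
  define W where "W = {x\<in>A. idx_less x a \<and> idx_less (f x) (f a)}"
  have fne: "f x \<noteq> f a" if "x \<in> A" for x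
    using inj that aA by (auto simp: inj_on_def)
  have Seq: "S = S0 \<union> (Pair a ` P) \<union> ((\<lambda>x. (x, a)) ` Q)"
    unfolding S_def S0_def P_def Q_def by auto
  have d1: "S0 \<inter> (Pair a ` P) = {}" "(S0 \<union> Pair a ` P) \<inter> ((\<lambda>x. (x, a)) ` Q) = {}"
    unfolding S0_def P_def Q_def using aA by auto
  have cS: "card S = card S0 + card P + card Q"
    unfolding Seq
    apply (subst card_Un_disjoint[OF _ _ d1(2)], simp, simp)
    apply (subst card_Un_disjoint[OF _ _ d1(1)], simp, simp)
    apply (subst card_image, simp add: inj_on_def)+
    by simp
  have c1: "posn a A = card Q + card W"
  proof -
    have "{x\<in>A. idx_less x a} = Q \<union> W"
    proof -
      have "idx_less (f a) (f x) \<or> idx_less (f x) (f a)" if "x \<in> A" for x using fne[OF that] il_total[of "f a" "f x"] by auto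
      then show ?thesis unfolding Q_def W_def by auto
    qed
    moreover have "Q \<inter> W = {}" unfolding Q_def W_def using il_asym by blast
    ultimately show ?thesis unfolding posn_def by (simp add: card_Un_disjoint)
  qed
  have c2: "card {x\<in>A. idx_less (f x) (f a)} = card P + card W"
  proof -
    have "{x\<in>A. idx_less (f x) (f a)} = P \<union> W"
    proof -
      have "idx_less a x \<or> idx_less x a" if "x \<in> A" for x using aA that il_total[of a x] by auto
      then show ?thesis unfolding P_def W_def by auto
    qed
    moreover have "P \<inter> W = {}" unfolding P_def W_def using il_asym by blast
    ultimately show ?thesis by (simp add: card_Un_disjoint)
  qed
  have "bsign f (insert a A) = (-1) ^ card S" unfolding bsign_def S_def by simp
  also have "\<dots> = (-1) ^ card S0 * (-1) ^ (card P + card Q)" by (simp add: cS power_add)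
  also have "(-1::complex) ^ (card P + card Q) = (-1) ^ (posn a A + card {x\<in>A. idx_less (f x) (f a)})"
  proof -
    have "posn a A + card {x\<in>A. idx_less (f x) (f a)} = (card P + card Q) + 2 * card W"
      using c1 c2 by simp
    then show ?thesis by (simp add: power_add power_mult)
  qed
  finally show ?thesis unfolding bsign_def S0_def by simp
qed

definition detK :: "(('n::{finite,linorder} + 'n) \<Rightarrow> ('n + 'n) \<Rightarrow> complex) \<Rightarrow> ('n + 'n) set \<Rightarrow> ('n + 'n) set \<Rightarrow> complex" where
  "detK G A B = (\<Sum>f\<in>bijs A B. bsign f A * (\<Prod>a\<in>A. G a (f a)))"

lemma detK_insert:
  fixes G :: "('n::{finite,linorder} + 'n) \<Rightarrow> ('n + 'n) \<Rightarrow> complex"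
  assumes aA: "a \<notin> A"
  shows "detK G (insert a A) B =
    (-1) ^ posn a A * (\<Sum>b\<in>B. (-1) ^ posn b (B - {b}) * G a b * detK G A (B - {b}))"
proof -
  define T where "T = (\<lambda>f. bsign f (insert a A) * (\<Prod>x\<in>insert a A. G x (f x)))"
  define R where "R = (\<lambda>(b, g). (-1) ^ posn a A * ((-1) ^ posn b (B - {b}) * G a b *
       (bsign g A * (\<Prod>x\<in>A. G x (g x)))))"
  have "(-1) ^ posn a A * (\<Sum>b\<in>B. (-1) ^ posn b (B - {b}) * G a b * detK G A (B - {b}))
      = (\<Sum>b\<in>B. \<Sum>g\<in>bijs A (B - {b}). R (b, g))"
    unfolding detK_def R_def by (simp add: sum_distrib_left)
  also have "\<dots> = sum R (Sigma B (\<lambda>b. bijs A (B - {b})))"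
    using sum.Sigma[of B "\<lambda>b. bijs A (B - {b})" "\<lambda>b g. R (b, g)"] by simp
  also have "\<dots> = sum T (bijs (insert a A) B)"
  proof (rule sum.reindex_bij_witness[where i="\<lambda>f. (f a, f(a := undefined))" and j="\<lambda>(b, g). g(a := b)"])
    fix s assume s: "s \<in> Sigma B (\<lambda>b. bijs A (B - {b}))"
    obtain b g where sbg: "s = (b, g)" by (cases s)
    have bB: "b \<in> B" and bij: "bij_betw g A (B - {b})" and und: "\<forall>x. x \<notin> A \<longrightarrow> g x = undefined"
      using s sbg by (auto simp: bijs_def)
    have ga: "g a = undefined" using und aA by auto
    show "(\<lambda>f. (f a, f(a := undefined))) ((\<lambda>(b, g). g(a := b)) s) = s"
      using ga sbg by auto
    have imA: "(g(a := b)) ` A = B - {b}" using bij aA by (auto simp: bij_betw_def image_def)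
    have injg: "inj_on (g(a := b)) A" using bij aA by (auto simp: bij_betw_def inj_on_def)
    have bij2: "bij_betw (g(a := b)) (insert a A) B"
      unfolding bij_betw_def using imA injg bB aA
      by (auto simp: inj_on_insert)
    show "(\<lambda>(b, g). g(a := b)) s \<in> bijs (insert a A) B"
      using bij2 und sbg by (auto simp: bijs_def)
    show "T ((\<lambda>(b, g). g(a := b)) s) = R s"
    proof -
      have inj2: "inj_on (g(a := b)) (insert a A)" using bij2 by (auto simp: bij_betw_def)
      have bs: "bsign (g(a := b)) (insert a A) = bsign g A * (-1) ^ (posn a A + posn b (B - {b}))"
      proof -
        have e1: "bsign (g(a := b)) A = bsign g A" by (rule bsign_cong) (use aA in auto)
        have "card {x\<in>A. idx_less ((g(a := b)) x) ((g(a := b)) a)} = card {x\<in>A. idx_less (g x) b}"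
          using aA by (intro arg_cong[where f=card]) auto
        also have "\<dots> = card (g ` {x\<in>A. idx_less (g x) b})"
          using bij by (intro card_image[symmetric]) (auto simp: bij_betw_def inj_on_def)
        also have "g ` {x\<in>A. idx_less (g x) b} = {y\<in>B - {b}. idx_less y b}"
          using bij by (auto simp: bij_betw_def)
        finally show ?thesis using bsign_insert[OF aA inj2] e1 by (simp add: posn_def)
      qed
      have pr: "(\<Prod>x\<in>insert a A. G x ((g(a := b)) x)) = G a b * (\<Prod>x\<in>A. G x (g x))"
      proof -
        have "(\<Prod>x\<in>A. G x ((g(a := b)) x)) = (\<Prod>x\<in>A. G x (g x))"
          using aA by (intro prod.cong) auto
        then show ?thesis using aA by (simp add: prod.insert)
      qed
      show ?thesis unfolding T_def R_def sbg using bs pr by (simp add: power_add mult_ac)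
    qed
  next
    fix f assume f: "f \<in> bijs (insert a A) B"
    have bij: "bij_betw f (insert a A) B" and und: "\<forall>x. x \<notin> insert a A \<longrightarrow> f x = undefined"
      using f by (auto simp: bijs_def)
    show "(\<lambda>(b, g). g(a := b)) ((\<lambda>f. (f a, f(a := undefined))) f) = f" by auto
    have faB: "f a \<in> B" using bij by (auto simp: bij_betw_def)
    have injA: "inj_on f A" using bij by (auto simp: bij_betw_def inj_on_def)
    have imA: "f ` A = B - {f a}"
    proof -
      have "f ` insert a A = B" using bij by (auto simp: bij_betw_def)
      moreover have "f a \<notin> f ` A" using bij aA by (auto simp: bij_betw_def inj_on_def)
      ultimately show ?thesis by (auto simp: image_iff)
    qed
    have "bij_betw (f(a := undefined)) A (B - {f a})"
      unfolding bij_betw_def using injA imA aA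
      by (auto simp: inj_on_def image_def)
    then show "(\<lambda>f. (f a, f(a := undefined))) f \<in> Sigma B (\<lambda>b. bijs A (B - {b}))"
      using faB und by (auto simp: bijs_def)
  qed
  finally show ?thesis unfolding detK_def T_def by simp
qed


lemma posn_remove:
  fixes B :: "('n::{finite,linorder} + 'n) set"
  assumes "b \<in> B"
  shows "posn c B = posn c (B - {b}) + (if idx_less b c then 1 else 0)"
proof (cases "idx_less b c")
  case True
  have "{x\<in>B. idx_less x c} = insert b {x\<in>B - {b}. idx_less x c}" using assms True by auto
  then show ?thesis using True unfolding posn_def by simp
next
  case False
  have "{x\<in>B. idx_less x c} = {x\<in>B - {b}. idx_less x c}" using assms False by auto
  then show ?thesis using False unfolding posn_def by simp
qed

lemma antisym_sum_zero:
  fixes F :: "'a \<Rightarrow> 'a \<Rightarrow> complex"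
  assumes fin: "finite B" and anti: "\<And>b c. b \<in> B \<Longrightarrow> c \<in> B \<Longrightarrow> b \<noteq> c \<Longrightarrow> F c b = - F b c"
  shows "(\<Sum>b\<in>B. \<Sum>c\<in>B - {b}. F b c) = 0"
proof -
  define H where "H = (\<lambda>b c. if b = c then 0 else F b c)"
  have e1: "(\<Sum>b\<in>B. \<Sum>c\<in>B - {b}. F b c) = (\<Sum>b\<in>B. \<Sum>c\<in>B. H b c)"
  proof (rule sum.cong[OF refl])
    fix b assume "b \<in> B"
    then show "(\<Sum>c\<in>B - {b}. F b c) = (\<Sum>c\<in>B. H b c)"
      by (intro sum.mono_neutral_cong_left) (auto simp: fin H_def)
  qed
  have e2: "(\<Sum>b\<in>B. \<Sum>c\<in>B. H b c) = (\<Sum>c\<in>B. \<Sum>b\<in>B. H b c)" by (rule sum.swap)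
  have e3: "(\<Sum>c\<in>B. \<Sum>b\<in>B. H b c) = (\<Sum>c\<in>B. \<Sum>b\<in>B. - H c b)"
  proof (intro sum.cong refl)
    fix c b assume "c \<in> B" "b \<in> B"
    then show "H b c = - H c b" unfolding H_def using anti[of c b] by auto
  qed
  have "(\<Sum>b\<in>B. \<Sum>c\<in>B. H b c) = - (\<Sum>b\<in>B. \<Sum>c\<in>B. H b c)"
    using e2 e3 by (simp add: sum_negf)
  then have "(\<Sum>b\<in>B. \<Sum>c\<in>B. H b c) = 0" by simp
  then show ?thesis using e1 by simp
qed

lemma detK_vanish:
  fixes G :: "('n::{finite,linorder} + 'n) \<Rightarrow> ('n + 'n) \<Rightarrow> complex"
  assumes aA: "a \<in> A"
  shows "(\<Sum>b\<in>B. (-1) ^ posn b (B - {b}) * G a b * detK G A (B - {b})) = 0"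
proof -
  define A0 where "A0 = A - {a}"
  have A: "A = insert a A0" and a0: "a \<notin> A0" using aA by (auto simp: A0_def)
  define F where "F = (\<lambda>b c. (-1) ^ posn b (B - {b}) * (-1) ^ posn c (B - {b} - {c}) * G a b * G a c * detK G A0 (B - {b} - {c}))"
  have "(\<Sum>b\<in>B. (-1) ^ posn b (B - {b}) * G a b * detK G A (B - {b}))
      = (\<Sum>b\<in>B. (-1) ^ posn a A0 * (\<Sum>c\<in>B - {b}. F b c))"
    unfolding A detK_insert[OF a0] F_def
    by (intro sum.cong refl) (simp add: sum_distrib_left mult_ac)
  also have "\<dots> = (-1) ^ posn a A0 * (\<Sum>b\<in>B. \<Sum>c\<in>B - {b}. F b c)"
    by (simp add: sum_distrib_left)
  also have "(\<Sum>b\<in>B. \<Sum>c\<in>B - {b}. F b c) = 0"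
  proof (rule antisym_sum_zero)
    show "finite B" by simp
    fix b c assume b: "b \<in> B" and c: "c \<in> B" and bc: "b \<noteq> c"
    have p1: "posn c (B - {c}) = posn c (B - {c} - {b}) + (if idx_less b c then 1 else 0)"
      using b bc by (intro posn_remove) auto
    have p2: "posn b (B - {b}) = posn b (B - {b} - {c}) + (if idx_less c b then 1 else 0)"
      using c bc by (intro posn_remove) auto
    have sw: "B - {c} - {b} = B - {b} - {c}" by auto
    have tot: "idx_less b c \<noteq> idx_less c b" using il_total[OF bc] il_asym by blast
    define s where "s = (-1) ^ posn b (B - {b} - {c}) * (-1) ^ posn c (B - {b} - {c}) * G a b * G a c * detK G A0 (B - {b} - {c})"
    have f1: "F b c = (if idx_less c b then - s else s)"
      unfolding F_def p2 s_def by (simp add: power_add)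
    have f2: "F c b = (if idx_less b c then - s else s)"
      unfolding F_def p1 s_def sw by (simp add: power_add mult_ac)
    show "F c b = - F b c"
      unfolding f1 f2 using tot by auto
  qed
  finally show ?thesis by simp
qed


definition ipG :: "(('n::{finite,linorder} + 'n) \<Rightarrow> ('n + 'n) \<Rightarrow> complex) \<Rightarrow> 'n form \<Rightarrow> 'n form \<Rightarrow> complex" where
  "ipG G x y = (\<Sum>A\<in>UNIV. \<Sum>B\<in>UNIV. x A * cnj (y B) * detK G A B)"

definition ext :: "('n::{finite,linorder} + 'n) \<Rightarrow> 'n form \<Rightarrow> 'n form" where
  "ext a x = (\<lambda>C. if a \<in> C then (-1) ^ posn a (C - {a}) * x (C - {a}) else 0)"

definition iota :: "('n::{finite,linorder} + 'n) \<Rightarrow> 'n form \<Rightarrow> 'n form" where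
  "iota b y = (\<lambda>B. if b \<in> B then 0 else (-1) ^ posn b B * y (insert b B))"

definition Iop :: "(('n::{finite,linorder} + 'n) \<Rightarrow> ('n + 'n) \<Rightarrow> complex) \<Rightarrow> ('n + 'n) \<Rightarrow> 'n form \<Rightarrow> 'n form" where
  "Iop G a y = (\<lambda>B. \<Sum>b\<in>UNIV. cnj (G a b) * iota b y B)"

lemma sum_insert_reindex:
  "(\<Sum>B'\<in>{B'. b \<notin> B'}. F (insert b B') B') = (\<Sum>B\<in>{B. b \<in> B}. F B (B - {b}))"
  by (rule sum.reindex_bij_witness[where i="\<lambda>B. B - {b}" and j="insert b"]) auto

lemma sum_insert_reindex1:
  "(\<Sum>B'\<in>{B'. b \<notin> B'}. f (insert b B')) = (\<Sum>B\<in>{B. b \<in> B}. f B)"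
  using sum_insert_reindex[where F="\<lambda>B B'. f B"] by simp

lemma swap_sum:
  fixes G :: "('n::{finite,linorder} + 'n) \<Rightarrow> ('n + 'n) \<Rightarrow> complex"
  shows "(\<Sum>B\<in>UNIV. cnj (y B) * (\<Sum>b\<in>B. (-1) ^ posn b (B - {b}) * G a b * detK G A (B - {b})))
       = (\<Sum>B\<in>UNIV. cnj (Iop G a y B) * detK G A B)"
proof -
  define h where "h = (\<lambda>b B. G a b * (-1) ^ posn b (B - {b}) * cnj (y B) * detK G A (B - {b}))"
  have "(\<Sum>B\<in>UNIV. cnj (y B) * (\<Sum>b\<in>B. (-1) ^ posn b (B - {b}) * G a b * detK G A (B - {b})))
      = (\<Sum>B\<in>UNIV. \<Sum>b\<in>UNIV. if b \<in> B then h b B else 0)"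
    unfolding h_def
    by (rule sum.cong[OF refl]) (simp add: sum_distrib_left sum.inter_filter[symmetric] mult_ac)
  also have "\<dots> = (\<Sum>b\<in>UNIV. \<Sum>B\<in>UNIV. if b \<in> B then h b B else 0)" by (rule sum.swap)
  also have "\<dots> = (\<Sum>b\<in>UNIV. \<Sum>B\<in>{B. b \<in> B}. h b B)"
    by (rule sum.cong[OF refl]) (simp add: sum.inter_filter[symmetric])
  also have "\<dots> = (\<Sum>b\<in>UNIV. \<Sum>B'\<in>{B'. b \<notin> B'}. h b (insert b B'))"
    by (rule sum.cong[OF refl]) (rule sum_insert_reindex1[symmetric])
  also have "\<dots> = (\<Sum>b\<in>UNIV. \<Sum>B'\<in>UNIV. G a b * cnj (iota b y B') * detK G A B')"
  proof (rule sum.cong[OF refl])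
    fix b
    have "(\<Sum>B'\<in>UNIV. G a b * cnj (iota b y B') * detK G A B') = (\<Sum>B'\<in>{B'. b \<notin> B'}. G a b * cnj (iota b y B') * detK G A B')"
      by (rule sum.mono_neutral_cong_right) (auto simp: iota_def)
    also have "\<dots> = (\<Sum>B'\<in>{B'. b \<notin> B'}. h b (insert b B'))"
    proof (rule sum.cong[OF refl])
      fix B' assume "B' \<in> {B'. b \<notin> B'}"
      then have bB: "b \<notin> B'" by simp
      then have "insert b B' - {b} = B'" by auto
      then show "G a b * cnj (iota b y B') * detK G A B' = h b (insert b B')"
        using bB by (simp add: h_def iota_def mult_ac)
    qed
    finally show "(\<Sum>B'\<in>{B'. b \<notin> B'}. h b (insert b B')) = (\<Sum>B'\<in>UNIV. G a b * cnj (iota b y B') * detK G A B')" by simp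
  qed
  also have "\<dots> = (\<Sum>B'\<in>UNIV. \<Sum>b\<in>UNIV. G a b * cnj (iota b y B') * detK G A B')" by (rule sum.swap)
  also have "\<dots> = (\<Sum>B\<in>UNIV. cnj (Iop G a y B) * detK G A B)"
    unfolding Iop_def by (simp add: sum_distrib_right)
  finally show ?thesis .
qed

lemma adj_ext:
  fixes G :: "('n::{finite,linorder} + 'n) \<Rightarrow> ('n + 'n) \<Rightarrow> complex"
  shows "ipG G (ext a x) y = ipG G x (Iop G a y)"
proof -
  define R where "R = (\<lambda>A. \<Sum>B\<in>UNIV. cnj (y B) * (\<Sum>b\<in>B. (-1) ^ posn b (B - {b}) * G a b * detK G A (B - {b})))"
  have kill: "R A = 0" if "a \<in> A" for A
    unfolding R_def detK_vanish[OF that] by simp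
  have "ipG G (ext a x) y = (\<Sum>C\<in>UNIV. \<Sum>B\<in>UNIV. ext a x C * cnj (y B) * detK G C B)"
    by (simp add: ipG_def)
  also have "\<dots> = (\<Sum>C\<in>{C. a \<in> C}. \<Sum>B\<in>UNIV. ext a x C * cnj (y B) * detK G C B)"
    by (rule sum.mono_neutral_cong_right) (auto simp: ext_def)
  also have "\<dots> = (\<Sum>A\<in>{A. a \<notin> A}. \<Sum>B\<in>UNIV. ext a x (insert a A) * cnj (y B) * detK G (insert a A) B)"
    by (rule sum_insert_reindex[where F="\<lambda>C A. \<Sum>B\<in>UNIV. ext a x C * cnj (y B) * detK G C B", symmetric])
  also have "\<dots> = (\<Sum>A\<in>{A. a \<notin> A}. x A * R A)"
  proof (rule sum.cong[OF refl])
    fix A assume "A \<in> {A. a \<notin> A}"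
    then have aA: "a \<notin> A" by simp
    then have e: "insert a A - {a} = A" by auto
    have pp: "(-1::complex) ^ posn a A * (-1) ^ posn a A = 1"
      by (simp add: power_add[symmetric] power_even_eq[symmetric] del: power_add)
    show "(\<Sum>B\<in>UNIV. ext a x (insert a A) * cnj (y B) * detK G (insert a A) B) = x A * R A"
      unfolding R_def ext_def detK_insert[OF aA] using e
      by (simp add: sum_distrib_left mult_ac pp)
  qed
  also have "\<dots> = (\<Sum>A\<in>UNIV. x A * R A)"
    by (rule sum.mono_neutral_cong_left) (auto simp: kill)
  also have "\<dots> = ipG G x (Iop G a y)"
    unfolding ipG_def R_def swap_sum
    by (simp add: sum_distrib_left mult_ac)
  finally show ?thesis .
qed



lemma sum_UNIV_plus:
  "(\<Sum>a\<in>(UNIV::('a::finite + 'b::finite) set). f a) = (\<Sum>j\<in>UNIV. f (Inl j)) + (\<Sum>k\<in>UNIV. f (Inr k))"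
proof -
  have "(\<Sum>a\<in>(UNIV::('a + 'b) set). f a) = (\<Sum>a\<in>range Inl \<union> range Inr. f a)"
    by (simp add: UNIV_sum[symmetric])
  also have "\<dots> = (\<Sum>a\<in>range Inl. f a) + (\<Sum>a\<in>range Inr. f a)"
    by (rule sum.union_disjoint) auto
  also have "\<dots> = (\<Sum>j\<in>UNIV. f (Inl j)) + (\<Sum>k\<in>UNIV. f (Inr k))"
    by (simp add: sum.reindex)
  finally show ?thesis .
qed

lemma bideg11_shape:
  fixes \<beta> :: "('n::{finite,linorder}) form"
  assumes "bideg 1 1 \<beta>" "\<beta> A \<noteq> 0"
  shows "\<exists>j k. A = {Inl j, Inr k}"
proof -
  have c1: "card {j. Inl j \<in> A} = 1" and c2: "card {j. Inr j \<in> A} = 1"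
    using assms unfolding bideg_def by auto
  obtain j where j: "{j. Inl j \<in> A} = {j}" using c1 card_1_singletonE by blast
  obtain k where k: "{j. Inr j \<in> A} = {k}" using c2 card_1_singletonE by blast
  have "A = {Inl j, Inr k}"
  proof
    show "A \<subseteq> {Inl j, Inr k}"
    proof
      fix x assume x: "x \<in> A"
      show "x \<in> {Inl j, Inr k}"
      proof (cases x)
        case (Inl a) then show ?thesis using x j by auto
      next
        case (Inr a) then show ?thesis using x k by auto
      qed
    qed
    show "{Inl j, Inr k} \<subseteq> A" using j k by auto
  qed
  then show ?thesis by blast
qed

lemma ss_pair:
  fixes C :: "('n::{finite,linorder} + 'n) set"
  assumes "Inl j \<in> C" "Inr k \<in> C"
  shows "shuffle_sign {Inl j, Inr k} (C - {Inl j, Inr k}) =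
    (-1) ^ posn (Inl j) (C - {Inl j}) * (-1) ^ posn (Inr k) (C - {Inl j} - {Inr k})"
proof -
  define R where "R = C - {Inl j, Inr k}"
  have S: "{(a, b). a \<in> {Inl j, Inr k} \<and> b \<in> R \<and> idx_less b a}
      = Pair (Inl j) ` {b\<in>R. idx_less b (Inl j)} \<union> Pair (Inr k) ` {b\<in>R. idx_less b (Inr k)}"
    by auto
  have d: "Pair (Inl j) ` {b\<in>R. idx_less b (Inl j)} \<inter> Pair (Inr k) ` {b\<in>R. idx_less b (Inr k)} = {}"
    by auto
  have cS: "card {(a, b). a \<in> {Inl j, Inr k} \<and> b \<in> R \<and> idx_less b a}
      = card {b\<in>R. idx_less b (Inl j)} + card {b\<in>R. idx_less b (Inr k)}"
    unfolding S by (subst card_Un_disjoint[OF _ _ d]) (auto simp: card_image inj_on_def)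
  have p1: "posn (Inl j) (C - {Inl j}) = card {b\<in>R. idx_less b (Inl j)}"
    unfolding posn_def R_def by (rule arg_cong[where f=card]) auto
  have p2: "posn (Inr k) (C - {Inl j} - {Inr k}) = card {b\<in>R. idx_less b (Inr k)}"
    unfolding posn_def R_def by (rule arg_cong[where f=card]) auto
  show ?thesis unfolding shuffle_sign_def R_def[symmetric] cS p1 p2 by (simp add: power_add)
qed

lemma ext_ext:
  "ext (Inl j) (ext (Inr k) x) C =
    (if Inl j \<in> C \<and> Inr k \<in> C then (-1) ^ posn (Inl j) (C - {Inl j}) * (-1) ^ posn (Inr k) (C - {Inl j} - {Inr k})
       * x (C - {Inl j, Inr k}) else 0)"
proof -
  have "C - {Inl j} - {Inr k} = C - {Inl j, Inr k}" by auto
  then show ?thesis unfolding ext_def by auto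
qed

lemma wedge_decomp:
  fixes \<beta> x :: "('n::{finite,linorder}) form"
  assumes b: "bideg 1 1 \<beta>"
  shows "wedge \<beta> x = (\<lambda>C. \<Sum>j\<in>UNIV. \<Sum>k\<in>UNIV. \<beta> {Inl j, Inr k} * ext (Inl j) (ext (Inr k) x) C)"
proof
  fix C :: "('n + 'n) set"
  define pr where "pr = (\<lambda>(j::'n, k::'n). {Inl j, Inr k})"
  define S where "S = {(j, k). Inl j \<in> C \<and> Inr k \<in> C}"
  define h where "h = (\<lambda>A. shuffle_sign A (C - A) * \<beta> A * x (C - A))"
  have injpr: "inj_on pr S" unfolding pr_def inj_on_def S_def by (auto simp: doubleton_eq_iff)
  have "wedge \<beta> x C = (\<Sum>A\<in>Pow C. h A)" unfolding wedge_def h_def by simp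
  also have "\<dots> = (\<Sum>A\<in>pr ` S. h A)"
  proof (rule sum.mono_neutral_right)
    show "pr ` S \<subseteq> Pow C" unfolding pr_def S_def by auto
    show "\<forall>A\<in>Pow C - pr ` S. h A = 0"
    proof
      fix A assume A: "A \<in> Pow C - pr ` S"
      show "h A = 0"
      proof (rule ccontr)
        assume "h A \<noteq> 0"
        then have "\<beta> A \<noteq> 0" unfolding h_def by auto
        then obtain j k where "A = {Inl j, Inr k}" using bideg11_shape[OF b] by blast
        then show False using A unfolding pr_def S_def by (auto simp: image_iff)
      qed
    qed
  qed simp
  also have "\<dots> = (\<Sum>p\<in>S. h (pr p))" by (simp add: sum.reindex[OF injpr])
  also have "\<dots> = (\<Sum>p\<in>UNIV. case p of (j, k) \<Rightarrow> \<beta> {Inl j, Inr k} * ext (Inl j) (ext (Inr k) x) C)"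
  proof (rule sum.mono_neutral_cong_left)
    show "\<forall>i\<in>UNIV - S. (case i of (j, k) \<Rightarrow> \<beta> {Inl j, Inr k} * ext (Inl j) (ext (Inr k) x) C) = 0"
      unfolding S_def by (auto simp: ext_ext split: if_splits)
    fix p assume "p \<in> S"
    then obtain j k where p: "p = (j, k)" "Inl j \<in> C" "Inr k \<in> C" unfolding S_def by auto
    show "h (pr p) = (case p of (j, k) \<Rightarrow> \<beta> {Inl j, Inr k} * ext (Inl j) (ext (Inr k) x) C)"
      unfolding p h_def pr_def using p(2,3) by (simp add: ext_ext ss_pair mult_ac)
  qed auto
  also have "\<dots> = (\<Sum>j\<in>UNIV. \<Sum>k\<in>UNIV. \<beta> {Inl j, Inr k} * ext (Inl j) (ext (Inr k) x) C)"
    by (simp add: sum.cartesian_product UNIV_Times_UNIV[symmetric] del: UNIV_Times_UNIV)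
  finally show "wedge \<beta> x C = (\<Sum>j\<in>UNIV. \<Sum>k\<in>UNIV. \<beta> {Inl j, Inr k} * ext (Inl j) (ext (Inr k) x) C)" .
qed

lemma ipG_sum_left:
  "ipG G (\<lambda>C. \<Sum>p\<in>P. f p C) y = (\<Sum>p\<in>P. ipG G (f p) y)"
proof -
  have "ipG G (\<lambda>C. \<Sum>p\<in>P. f p C) y = (\<Sum>A\<in>UNIV. \<Sum>B\<in>UNIV. \<Sum>p\<in>P. f p A * cnj (y B) * detK G A B)"
    unfolding ipG_def by (simp add: sum_distrib_right)
  also have "\<dots> = (\<Sum>A\<in>UNIV. \<Sum>p\<in>P. \<Sum>B\<in>UNIV. f p A * cnj (y B) * detK G A B)"
    by (rule sum.cong[OF refl]) (rule sum.swap)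
  also have "\<dots> = (\<Sum>p\<in>P. \<Sum>A\<in>UNIV. \<Sum>B\<in>UNIV. f p A * cnj (y B) * detK G A B)"
    by (rule sum.swap)
  finally show ?thesis unfolding ipG_def .
qed

lemma ipG_scale_left: "ipG G (\<lambda>C. c * f C) y = c * ipG G f y"
  unfolding ipG_def by (simp add: sum_distrib_left mult_ac)

lemma ipG_sum_right:
  "ipG G x (\<lambda>B. \<Sum>p\<in>P. f p B) = (\<Sum>p\<in>P. ipG G x (f p))"
proof -
  have "ipG G x (\<lambda>B. \<Sum>p\<in>P. f p B) = (\<Sum>A\<in>UNIV. \<Sum>B\<in>UNIV. \<Sum>p\<in>P. x A * cnj (f p B) * detK G A B)"
    unfolding ipG_def by (simp add: sum_distrib_right sum_distrib_left)
  also have "\<dots> = (\<Sum>A\<in>UNIV. \<Sum>p\<in>P. \<Sum>B\<in>UNIV. x A * cnj (f p B) * detK G A B)"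
    by (rule sum.cong[OF refl]) (rule sum.swap)
  also have "\<dots> = (\<Sum>p\<in>P. \<Sum>A\<in>UNIV. \<Sum>B\<in>UNIV. x A * cnj (f p B) * detK G A B)"
    by (rule sum.swap)
  finally show ?thesis unfolding ipG_def .
qed

lemma ipG_scale_right: "ipG G x (\<lambda>B. c * f B) = cnj c * ipG G x f"
  unfolding ipG_def by (simp add: sum_distrib_left mult_ac)

lemma ipG_diff_right: "ipG G x (\<lambda>B. f B - g B) = ipG G x f - ipG G x g"
  unfolding ipG_def by (simp add: sum_subtractf ring_distribs)

definition LamG :: "(('n::{finite,linorder} + 'n) \<Rightarrow> ('n + 'n) \<Rightarrow> complex) \<Rightarrow> 'n form \<Rightarrow> 'n form \<Rightarrow> 'n form" where
  "LamG G \<beta> y = (\<lambda>A. \<Sum>j\<in>UNIV. \<Sum>k\<in>UNIV. cnj (\<beta> {Inl j, Inr k}) * Iop G (Inr k) (Iop G (Inl j) y) A)"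

lemma adj_wedge:
  fixes \<beta> :: "('n::{finite,linorder}) form"
  assumes b: "bideg 1 1 \<beta>"
  shows "ipG G (wedge \<beta> x) y = ipG G x (LamG G \<beta> y)"
proof -
  have "ipG G (wedge \<beta> x) y = (\<Sum>j\<in>UNIV. \<Sum>k\<in>UNIV. \<beta> {Inl j, Inr k} * ipG G (ext (Inl j) (ext (Inr k) x)) y)"
    unfolding wedge_decomp[OF b] ipG_sum_left ipG_scale_left ..
  also have "\<dots> = (\<Sum>j\<in>UNIV. \<Sum>k\<in>UNIV. \<beta> {Inl j, Inr k} * ipG G x (Iop G (Inr k) (Iop G (Inl j) y)))"
    unfolding adj_ext ..
  also have "\<dots> = ipG G x (LamG G \<beta> y)"
    unfolding LamG_def ipG_sum_right ipG_scale_right by simp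
  finally show ?thesis .
qed



lemma sum_single:
  assumes "\<And>A. A \<noteq> a \<Longrightarrow> F A = 0"
  shows "(\<Sum>A\<in>(UNIV::'a::finite set). F A) = F a"
proof -
  have "(\<Sum>A\<in>UNIV. F A) = F a + (\<Sum>A\<in>UNIV - {a}. F A)"
    by (rule sum.remove) auto
  also have "(\<Sum>A\<in>UNIV - {a}. F A) = 0" using assms by (intro sum.neutral) auto
  finally show ?thesis by simp
qed

lemma detK_empty: "detK G {} B = (if B = {} then 1 else 0)"
proof (cases "B = {}")
  case True
  have bj: "bijs {} {} = {\<lambda>x. undefined}"
    by (auto simp: bijs_def bij_betw_def)
  show ?thesis unfolding True detK_def bj by (simp add: bsign_def)
next
  case False
  have "bijs {} B = {}" using False by (auto simp: bijs_def bij_betw_def)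
  then show ?thesis using False by (simp add: detK_def)
qed

lemma ipG_kernel:
  fixes G :: "('n::{finite,linorder} + 'n) \<Rightarrow> ('n + 'n) \<Rightarrow> complex"
  assumes span: "\<And>b. \<exists>c. \<forall>y. iota b y = (\<lambda>B. \<Sum>a\<in>UNIV. c a * Iop G a y B)"
    and orth: "\<forall>x. ipG G x z = 0"
  shows "z B = 0"
proof -
  have main: "\<forall>z. (\<forall>x. ipG G x z = 0) \<longrightarrow> (\<forall>B. card B = m \<longrightarrow> z B = 0)" for m
  proof (induction m)
    case 0
    show ?case
    proof (intro allI impI)
      fix z :: "'n form" and B :: "('n + 'n) set"
      assume o: "\<forall>x. ipG G x z = 0" and c: "card B = 0"
      then have B: "B = {}" by simp
      define x0 :: "'n form" where "x0 = (\<lambda>A. if A = {} then 1 else 0)"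
      have "ipG G x0 z = (\<Sum>B\<in>UNIV. x0 {} * cnj (z B) * detK G {} B)"
        unfolding ipG_def by (rule sum_single) (simp add: x0_def)
      also have "\<dots> = x0 {} * cnj (z {}) * detK G {} {}"
        by (rule sum_single) (simp add: detK_empty)
      also have "\<dots> = cnj (z {})" by (simp add: x0_def detK_empty)
      finally have "cnj (z {}) = 0" using o by simp
      then show "z B = 0" using B by simp
    qed
  next
    case (Suc m)
    show ?case
    proof (intro allI impI)
      fix z :: "'n form" and B :: "('n + 'n) set"
      assume o: "\<forall>x. ipG G x z = 0" and c: "card B = Suc m"
      then obtain b where bB: "b \<in> B" by (metis card.empty ex_in_conv nat.distinct(1))
      obtain cf where cf: "\<forall>y. iota b y = (\<lambda>B. \<Sum>a\<in>UNIV. cf a * Iop G a y B)" using span by blast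
      have oI: "ipG G x (Iop G a z) = 0" for x a using o adj_ext[of G a x z] by simp
      have "ipG G x (iota b z) = 0" for x
      proof -
        have "ipG G x (iota b z) = ipG G x (\<lambda>B. \<Sum>a\<in>UNIV. cf a * Iop G a z B)" using cf by simp
        also have "\<dots> = 0" by (simp only: ipG_sum_right ipG_scale_right oI) simp
        finally show ?thesis .
      qed
      then have "iota b z (B - {b}) = 0" using Suc.IH c bB by simp
      moreover have "insert b (B - {b}) = B" using bB by auto
      ultimately show "z B = 0" by (simp add: iota_def)
    qed
  qed
  show ?thesis using main[of "card B"] orth by blast
qed

definition gram :: "complex ^ ('n::{finite,linorder}) ^ ('n::{finite,linorder}) \<Rightarrow> ('n + 'n) \<Rightarrow> ('n + 'n) \<Rightarrow> complex" where
  "gram M x y = (case (x, y) of (Inl j, Inl k) \<Rightarrow> M $ k $ j | (Inr j, Inr k) \<Rightarrow> M $ j $ k | _ \<Rightarrow> 0)"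

lemma dual_gram_eq: "dual_gram \<omega> = gram (matrix_inv (coef_mat \<omega>))"
  by (auto simp: dual_gram_def gram_def Let_def fun_eq_iff split: sum.splits)

lemma form_ip_eq: "form_ip \<omega> = ipG (dual_gram \<omega>)"
  by (simp add: fun_eq_iff form_ip_def ipG_def basis_ip_def detK_def)

lemma Iop_gram_L: "Iop (gram M) (Inl j) y B = (\<Sum>k\<in>UNIV. cnj (M $ k $ j) * iota (Inl k) y B)"
  unfolding Iop_def sum_UNIV_plus by (simp add: gram_def)

lemma Iop_gram_R: "Iop (gram M) (Inr j) y B = (\<Sum>k\<in>UNIV. cnj (M $ j $ k) * iota (Inr k) y B)"
  unfolding Iop_def sum_UNIV_plus by (simp add: gram_def)

lemma span_gram:
  fixes M h :: "complex ^ ('n::{finite,linorder}) ^ ('n::{finite,linorder})"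
  assumes Mh: "M ** h = mat 1" and hM: "h ** M = mat 1"
  shows "\<exists>c. \<forall>y. iota b y = (\<lambda>B. \<Sum>a\<in>UNIV. c a * Iop (gram M) a y B)"
proof (cases b)
  case (Inl k0)
  define c where "c = case_sum (\<lambda>j. cnj (h $ j $ k0)) (\<lambda>_::'n. 0)"
  have "iota b y B = (\<Sum>a\<in>UNIV. c a * Iop (gram M) a y B)" for y B
  proof -
    have "(\<Sum>a\<in>UNIV. c a * Iop (gram M) a y B)
        = (\<Sum>j\<in>UNIV. cnj (h $ j $ k0) * (\<Sum>k\<in>UNIV. cnj (M $ k $ j) * iota (Inl k) y B))"
      unfolding sum_UNIV_plus by (simp add: c_def Iop_gram_L)
    also have "\<dots> = (\<Sum>j\<in>UNIV. \<Sum>k\<in>UNIV. cnj (h $ j $ k0) * cnj (M $ k $ j) * iota (Inl k) y B)"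
      by (simp add: sum_distrib_left mult.assoc)
    also have "\<dots> = (\<Sum>k\<in>UNIV. \<Sum>j\<in>UNIV. cnj (h $ j $ k0) * cnj (M $ k $ j) * iota (Inl k) y B)"
      by (rule sum.swap)
    also have "\<dots> = (\<Sum>k\<in>UNIV. cnj ((M ** h) $ k $ k0) * iota (Inl k) y B)"
      by (simp add: matrix_matrix_mult_def sum_distrib_left mult_ac)
    also have "\<dots> = iota (Inl k0) y B"
      unfolding Mh by (rule trans[OF sum_single]) (auto simp: mat_def)
    finally show ?thesis using Inl by simp
  qed
  then show ?thesis by blast
next
  case (Inr k0)
  define c where "c = case_sum (\<lambda>_::'n. 0) (\<lambda>j. cnj (h $ k0 $ j))"
  have "iota b y B = (\<Sum>a\<in>UNIV. c a * Iop (gram M) a y B)" for y B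
  proof -
    have "(\<Sum>a\<in>UNIV. c a * Iop (gram M) a y B)
        = (\<Sum>j\<in>UNIV. cnj (h $ k0 $ j) * (\<Sum>k\<in>UNIV. cnj (M $ j $ k) * iota (Inr k) y B))"
      unfolding sum_UNIV_plus by (simp add: c_def Iop_gram_R)
    also have "\<dots> = (\<Sum>j\<in>UNIV. \<Sum>k\<in>UNIV. cnj (h $ k0 $ j) * cnj (M $ j $ k) * iota (Inr k) y B)"
      by (simp add: sum_distrib_left mult.assoc)
    also have "\<dots> = (\<Sum>k\<in>UNIV. \<Sum>j\<in>UNIV. cnj (h $ k0 $ j) * cnj (M $ j $ k) * iota (Inr k) y B)"
      by (rule sum.swap)
    also have "\<dots> = (\<Sum>k\<in>UNIV. cnj ((h ** M) $ k0 $ k) * iota (Inr k) y B)"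
      by (simp add: matrix_matrix_mult_def sum_distrib_left mult_ac)
    also have "\<dots> = iota (Inr k0) y B"
      unfolding hM by (rule trans[OF sum_single]) (auto simp: mat_def)
    finally show ?thesis using Inr by simp
  qed
  then show ?thesis by blast
qed

lemma matrix_inv_works:
  fixes h :: "'a::field ^ 'n ^ 'n"
  assumes "invertible h"
  shows "h ** matrix_inv h = mat 1" "matrix_inv h ** h = mat 1"
proof -
  have "\<exists>A'. h ** A' = mat 1 \<and> A' ** h = mat 1" using assms by (simp add: invertible_def)
  then have "h ** matrix_inv h = mat 1 \<and> matrix_inv h ** h = mat 1"
    unfolding matrix_inv_def by (rule someI_ex)
  then show "h ** matrix_inv h = mat 1" "matrix_inv h ** h = mat 1" by auto
qed

lemma herm_invertible:
  fixes \<rho> :: "('n::{finite,linorder}) form"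
  assumes "hermitian_metric \<rho>"
  shows "invertible (coef_mat \<rho>)"
proof -
  define h where "h = coef_mat \<rho>"
  have ker: "w = 0" if hw: "h *v w = 0" for w
  proof (rule ccontr)
    assume wne: "w \<noteq> 0"
    define v where "v = (\<chi> k. cnj (w $ k))"
    have "v \<noteq> 0" using wne unfolding v_def by (metis (mono_tags, lifting) complex_cnj_cnj complex_cnj_zero vec_eq_iff vec_lambda_beta zero_index)
    then have pos: "0 < Re (\<Sum>j\<in>UNIV. \<Sum>k\<in>UNIV. h $ j $ k * v $ j * cnj (v $ k))"
      using assms unfolding hermitian_metric_def h_def by blast
    have "(\<Sum>j\<in>UNIV. \<Sum>k\<in>UNIV. h $ j $ k * v $ j * cnj (v $ k)) = (\<Sum>j\<in>UNIV. v $ j * (h *v w) $ j)"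
      unfolding v_def matrix_vector_mult_def by (simp add: sum_distrib_left mult_ac)
    also have "\<dots> = 0" using hw by simp
    finally show False using pos by simp
  qed
  have "inj ((*v) h)"
  proof (rule injI)
    fix x y assume "h *v x = h *v y"
    then have "h *v (x - y) = 0" by (simp add: matrix_vector_mult_diff_distrib)
    then have "x - y = 0" by (rule ker)
    then show "x = y" by simp
  qed
  then have "det (matrix ((*v) h)) \<noteq> 0"
    using det_nz_iff_inj_gen[of "(*v) h"] by simp
  then show ?thesis unfolding h_def[symmetric] by (simp add: invertible_det_nz)
qed

lemma form_adj_wedge:
  fixes \<omega> \<beta> :: "('n::{finite,linorder}) form"
  assumes herm: "hermitian_metric \<omega>" and b: "bideg 1 1 \<beta>"
  shows "form_adj \<omega> (wedge \<beta>) y = LamG (gram (matrix_inv (coef_mat \<omega>))) \<beta> y"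
proof -
  define M where "M = matrix_inv (coef_mat \<omega>)"
  have inv: "coef_mat \<omega> ** M = mat 1" "M ** coef_mat \<omega> = mat 1"
    using matrix_inv_works[OF herm_invertible[OF herm]] unfolding M_def by auto
  have span: "\<And>b. \<exists>c. \<forall>y. iota b y = (\<lambda>B. \<Sum>a\<in>UNIV. c a * Iop (gram M) a y B)"
    using span_gram[OF inv(2) inv(1)] by blast
  have ipeq: "form_ip \<omega> = ipG (gram M)" unfolding form_ip_eq dual_gram_eq M_def ..
  show ?thesis
    unfolding form_adj_def ipeq M_def[symmetric]
  proof (rule the_equality)
    show "\<forall>x. ipG (gram M) (wedge \<beta> x) y = ipG (gram M) x (LamG (gram M) \<beta> y)"
      using adj_wedge[OF b] by blast
    fix y' assume y': "\<forall>x. ipG (gram M) (wedge \<beta> x) y = ipG (gram M) x y'"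
    have "\<forall>x. ipG (gram M) x (\<lambda>B. y' B - LamG (gram M) \<beta> y B) = 0"
      using y' adj_wedge[OF b] by (simp add: ipG_diff_right)
    then have "y' B - LamG (gram M) \<beta> y B = 0" for B
      using ipG_kernel[OF span, of "\<lambda>B. y' B - LamG (gram M) \<beta> y B"] by simp
    then show "y' = LamG (gram M) \<beta> y" by (simp add: fun_eq_iff)
  qed
qed



lemma sum4_reorder:
  fixes f :: "'a::finite \<Rightarrow> 'b::finite \<Rightarrow> 'c::finite \<Rightarrow> 'd::finite \<Rightarrow> complex"
  shows "(\<Sum>j\<in>UNIV. \<Sum>k\<in>UNIV. \<Sum>k'\<in>UNIV. \<Sum>j'\<in>UNIV. f j k k' j') = (\<Sum>j'\<in>UNIV. \<Sum>k'\<in>UNIV. \<Sum>j\<in>UNIV. \<Sum>k\<in>UNIV. f j k k' j')"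
proof -
  have "(\<Sum>j\<in>UNIV. \<Sum>k\<in>UNIV. \<Sum>k'\<in>UNIV. \<Sum>j'\<in>UNIV. f j k k' j') = (\<Sum>j\<in>UNIV. \<Sum>k\<in>UNIV. \<Sum>j'\<in>UNIV. \<Sum>k'\<in>UNIV. f j k k' j')"
    apply (rule sum.cong[OF refl], rule sum.cong[OF refl], rule sum.swap) done
  also have "\<dots> = (\<Sum>j\<in>UNIV. \<Sum>j'\<in>UNIV. \<Sum>k\<in>UNIV. \<Sum>k'\<in>UNIV. f j k k' j')"
    apply (rule sum.cong[OF refl], rule sum.swap) done
  also have "\<dots> = (\<Sum>j'\<in>UNIV. \<Sum>j\<in>UNIV. \<Sum>k\<in>UNIV. \<Sum>k'\<in>UNIV. f j k k' j')"
    by (rule sum.swap)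
  also have "\<dots> = (\<Sum>j'\<in>UNIV. \<Sum>j\<in>UNIV. \<Sum>k'\<in>UNIV. \<Sum>k\<in>UNIV. f j k k' j')"
    apply (rule sum.cong[OF refl], rule sum.cong[OF refl], rule sum.swap) done
  also have "\<dots> = (\<Sum>j'\<in>UNIV. \<Sum>k'\<in>UNIV. \<Sum>j\<in>UNIV. \<Sum>k\<in>UNIV. f j k k' j')"
    apply (rule sum.cong[OF refl], rule sum.swap) done
  finally show ?thesis .
qed

lemma iota_sum:
  "iota b (\<lambda>B. \<Sum>p\<in>P. c p * f p B) A = (\<Sum>p\<in>P. c p * iota b (f p) A)"
  unfolding iota_def by (simp add: sum_distrib_left mult_ac)

lemma coef_LamG:
  "LamG (gram M) \<beta> y A = (\<Sum>j'\<in>UNIV. \<Sum>k'\<in>UNIV.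
      cnj (\<Sum>j\<in>UNIV. \<Sum>k\<in>UNIV. M $ j' $ j * \<beta> {Inl j, Inr k} * M $ k $ k') * iota (Inr k') (iota (Inl j') y) A)"
proof -
  have IL: "Iop (gram M) (Inl j) y = (\<lambda>B. \<Sum>j'\<in>UNIV. cnj (M $ j' $ j) * iota (Inl j') y B)" for j
    by (rule ext) (rule Iop_gram_L)
  have "LamG (gram M) \<beta> y A = (\<Sum>j\<in>UNIV. \<Sum>k\<in>UNIV. \<Sum>k'\<in>UNIV. \<Sum>j'\<in>UNIV.
      cnj (\<beta> {Inl j, Inr k}) * cnj (M $ k $ k') * cnj (M $ j' $ j) * iota (Inr k') (iota (Inl j') y) A)"
    unfolding LamG_def Iop_gram_R IL iota_sum by (simp add: sum_distrib_left mult_ac)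
  also have "\<dots> = (\<Sum>j'\<in>UNIV. \<Sum>k'\<in>UNIV. \<Sum>j\<in>UNIV. \<Sum>k\<in>UNIV.
      cnj (\<beta> {Inl j, Inr k}) * cnj (M $ k $ k') * cnj (M $ j' $ j) * iota (Inr k') (iota (Inl j') y) A)"
    by (rule sum4_reorder)
  also have "\<dots> = (\<Sum>j'\<in>UNIV. \<Sum>k'\<in>UNIV.
      cnj (\<Sum>j\<in>UNIV. \<Sum>k\<in>UNIV. M $ j' $ j * \<beta> {Inl j, Inr k} * M $ k $ k') * iota (Inr k') (iota (Inl j') y) A)"
    by (simp add: sum_distrib_left mult_ac)
  finally show ?thesis .
qed

lemma triple_prod:
  fixes M H N :: "complex ^ 'n::finite ^ 'n"
  shows "(\<Sum>j\<in>UNIV. \<Sum>k\<in>UNIV. M $ a $ j * (c * H $ j $ k) * N $ k $ b) = c * ((M ** H) ** N) $ a $ b"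
proof -
  have "c * ((M ** H) ** N) $ a $ b = (\<Sum>k\<in>UNIV. \<Sum>j\<in>UNIV. M $ a $ j * (c * H $ j $ k) * N $ k $ b)"
    by (simp add: matrix_matrix_mult_def sum_distrib_left sum_distrib_right mult_ac)
  also have "\<dots> = (\<Sum>j\<in>UNIV. \<Sum>k\<in>UNIV. M $ a $ j * (c * H $ j $ k) * N $ k $ b)"
    by (rule sum.swap)
  finally show ?thesis by simp
qed

lemma form_coef: "\<rho> {Inl j, Inr k} = \<i> * coef_mat \<rho> $ j $ k"
  by (simp add: coef_mat_def mult.assoc[symmetric])

lemma herm_inv_mats:
  assumes "hermitian_metric \<rho>"
  shows "coef_mat \<rho> ** matrix_inv (coef_mat \<rho>) = mat 1" "matrix_inv (coef_mat \<rho>) ** coef_mat \<rho> = mat 1"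
  using matrix_inv_works[OF herm_invertible[OF assms]] by auto

lemma Lambda_explicit:
  fixes \<rho> y :: "('n::{finite,linorder}) form"
  assumes herm: "hermitian_metric \<rho>"
  shows "Lambda_op \<rho> y A = (\<Sum>j\<in>UNIV. \<Sum>k\<in>UNIV. cnj (\<i> * matrix_inv (coef_mat \<rho>) $ j $ k) * iota (Inr k) (iota (Inl j) y) A)"
proof -
  define M where "M = matrix_inv (coef_mat \<rho>)"
  have b: "bideg 1 1 \<rho>" using herm by (simp add: hermitian_metric_def real_11_form_def)
  have MM: "(M ** coef_mat \<rho>) ** M = M"
    using herm_inv_mats[OF herm] unfolding M_def by simp
  show ?thesis
    unfolding Lambda_op_def form_adj_wedge[OF herm b] M_def[symmetric] coef_LamG form_coef triple_prod MM ..
qed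

lemma adj_gamma_explicit:
  fixes \<omega> \<gamma> y :: "('n::{finite,linorder}) form"
  assumes herm: "hermitian_metric \<omega>" and g: "real_11_form \<gamma>"
  shows "form_adj \<omega> (wedge \<gamma>) y A = (\<Sum>j\<in>UNIV. \<Sum>k\<in>UNIV.
     cnj (\<i> * ((matrix_inv (coef_mat \<omega>) ** coef_mat \<gamma>) ** matrix_inv (coef_mat \<omega>)) $ j $ k) * iota (Inr k) (iota (Inl j) y) A)"
proof -
  have b: "bideg 1 1 \<gamma>" using g by (simp add: real_11_form_def)
  show ?thesis
    unfolding form_adj_wedge[OF herm b] coef_LamG form_coef triple_prod ..
qed



lemma vd_factor:
  fixes f Q :: "real \<Rightarrow> complex"
  assumes ev: "eventually (\<lambda>t. f t - f 0 = of_real t * Q t) (at 0)" and lim: "(Q \<longlongrightarrow> L) (at 0)"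
  shows "(f has_vector_derivative L) (at 0)"
  unfolding has_vector_derivative_def has_derivative_iff_norm
proof
  show "bounded_linear (\<lambda>x. x *\<^sub>R L)" by (rule bounded_linear_scaleR_left)
  have ev2: "eventually (\<lambda>y. norm (Q y - L) = norm (f y - f 0 - (y - 0) *\<^sub>R L) / norm (y - 0)) (at 0)"
    using ev eventually_neq_at_within[of 0 0 UNIV]
  proof eventually_elim
    case (elim y)
    then have "f y - f 0 - (y - 0) *\<^sub>R L = of_real y * (Q y - L)"
      by (simp add: scaleR_conv_of_real algebra_simps)
    then have "norm (f y - f 0 - (y - 0) *\<^sub>R L) = \<bar>y\<bar> * norm (Q y - L)"
      by (simp add: norm_mult)
    then show ?case using elim by simp
  qed
  have "((\<lambda>y. norm (Q y - L)) \<longlongrightarrow> 0) (at 0)"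
    using lim by (simp add: tendsto_norm_zero_iff LIM_zero_iff)
  then show "((\<lambda>y. norm (f y - f 0 - (y - 0) *\<^sub>R L) / norm (y - 0)) \<longlongrightarrow> 0) (at 0)"
    using tendsto_cong[OF ev2] by simp
qed

lemma det_tendsto:
  fixes P Q :: "'n::finite \<Rightarrow> 'n \<Rightarrow> complex"
  shows "((\<lambda>t::real. det (\<chi> i l. P i l + of_real t * Q i l)) \<longlongrightarrow> det (\<chi> i l. P i l)) (at 0)"
proof -
  have "((\<lambda>t::real. det (\<chi> i l. P i l + of_real t * Q i l)) \<longlongrightarrow> det (\<chi> i l. P i l + of_real 0 * Q i l)) (at 0)"
    unfolding det_def by (simp only: vec_lambda_beta) (intro tendsto_intros)
  then show ?thesis by simp
qed

lemma iota2_deriv: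
  assumes "\<And>B. ((\<lambda>t. \<alpha> t B) has_vector_derivative \<alpha>' B) (at 0)"
  shows "((\<lambda>t. iota b (iota b' (\<alpha> t)) A) has_vector_derivative iota b (iota b' \<alpha>') A) (at 0)"
proof (cases "b \<in> A")
  case True
  then show ?thesis by (simp add: iota_def has_vector_derivative_const)
next
  case False
  show ?thesis
  proof (cases "b' \<in> insert b A")
    case True
    then show ?thesis using False by (simp add: iota_def has_vector_derivative_const)
  next
    case False2: False
    show ?thesis using False False2 unfolding iota_def
      by (simp del: insert_iff) (intro has_vector_derivative_mult_right assms)
  qed
qed

lemma mat_add_rdistrib: "((A::complex^'n::finite^'m::finite) + B) ** C = A ** C + B ** C"
  by (simp add: matrix_matrix_mult_def vec_eq_iff sum.distrib ring_distribs)


lemma Minv_deriv: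
  fixes h g :: "complex ^ 'n::finite ^ 'n"
  assumes eps: "\<epsilon> > 0"
    and inv: "\<And>t. t \<in> {-\<epsilon><..<\<epsilon>} \<Longrightarrow> invertible (h + (\<chi> j k. of_real t * g $ j $ k))"
  shows "((\<lambda>t. matrix_inv (h + (\<chi> j k. of_real t * g $ j $ k)) $ a $ b) has_vector_derivative
           (- ((matrix_inv h ** g) ** matrix_inv h) $ a $ b)) (at 0)"
proof -
  define T where "T = (\<lambda>t::real. (\<chi> j k. of_real t * g $ j $ k) :: complex ^ 'n ^ 'n)"
  define Ht where "Ht = (\<lambda>t. h + T t)"
  define Mt where "Mt = (\<lambda>t. matrix_inv (Ht t))"
  define M where "M = matrix_inv h"
  define I where "I = {-\<epsilon><..<\<epsilon>}"
  have T0: "T 0 = 0" by (simp add: T_def vec_eq_iff)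
  have Ht0: "Ht 0 = h" by (simp add: Ht_def T0)
  have Mt0: "Mt 0 = M" by (simp add: Mt_def M_def Ht0)
  have invt: "invertible (Ht t)" if "t \<in> I" for t using inv that unfolding Ht_def T_def I_def by simp
  have I0: "0 \<in> I" using eps by (simp add: I_def)
  have invh: "invertible h" using invt[OF I0] Ht0 by simp
  have hM: "h ** M = mat 1" using matrix_inv_works[OF invh] by (simp add: M_def)
  have evI: "eventually (\<lambda>t. t \<in> I) (at 0)"
    unfolding eventually_at I_def using eps by (intro exI[of _ \<epsilon>]) (auto simp: dist_real_def)
  have key: "Mt t $ a $ b - M $ a $ b = of_real t * (- ((Mt t ** g) ** M) $ a $ b)" if "t \<in> I" for t
  proof -
    have MtH: "Mt t ** Ht t = mat 1" using matrix_inv_works[OF invt[OF that]] by (simp add: Mt_def)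
    have e1: "(Mt t ** h) ** M = Mt t" by (simp add: matrix_mul_assoc[symmetric] hM)
    have e2: "(Mt t ** Ht t) ** M = (Mt t ** h) ** M + (Mt t ** T t) ** M"
      by (simp add: Ht_def matrix_add_ldistrib mat_add_rdistrib)
    have e3: "((Mt t ** T t) ** M) $ a $ b = of_real t * ((Mt t ** g) ** M) $ a $ b"
      by (simp add: T_def matrix_matrix_mult_def sum_distrib_left sum_distrib_right mult_ac)
    have "M = Mt t + (Mt t ** T t) ** M" using e1 e2 MtH by simp
    then have "M $ a $ b = (Mt t + (Mt t ** T t) ** M) $ a $ b" by simp
    then have "M $ a $ b = Mt t $ a $ b + ((Mt t ** T t) ** M) $ a $ b" by simp
    then show ?thesis using e3 by simp
  qed
  have cont: "((\<lambda>t. Mt t $ p $ q) \<longlongrightarrow> M $ p $ q) (at 0)" for p q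
  proof -
    define P where "P = (\<lambda>i j. if j = p then axis q 1 $ i else h $ i $ j)"
    define Q where "Q = (\<lambda>i j. if j = p then 0 else g $ i $ j)"
    define CR where "CR = (\<lambda>t::real. det (\<chi> i j. P i j + of_real t * Q i j) / det (\<chi> i j. h $ i $ j + of_real t * g $ i $ j))"
    have cr: "Mt t $ p $ q = CR t" if "t \<in> I" for t
    proof -
      have d: "det (Ht t) \<noteq> 0" using invt[OF that] by (simp add: invertible_det_nz)
      have "Ht t *v (Mt t *v axis q 1) = axis q 1"
        using matrix_inv_works[OF invt[OF that]] by (simp add: Mt_def matrix_vector_mul_assoc)
      then have "Mt t *v axis q 1 = (\<chi> k. det (\<chi> i j. if j = k then axis q 1 $ i else Ht t $ i $ j) / det (Ht t))"
        using cramer[OF d] by blast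
      then have "(Mt t *v axis q 1) $ p = det (\<chi> i j. if j = p then axis q 1 $ i else Ht t $ i $ j) / det (Ht t)"
        by simp
      moreover have "(Mt t *v axis q 1) $ p = Mt t $ p $ q"
        by (simp add: matrix_vector_mult_def axis_def if_distrib cong: if_cong)
      moreover have "(\<chi> i j. if j = p then axis q 1 $ i else Ht t $ i $ j) = (\<chi> i j. P i j + of_real t * Q i j)"
        by (simp add: vec_eq_iff P_def Q_def Ht_def T_def)
      moreover have "Ht t = (\<chi> i j. h $ i $ j + of_real t * g $ i $ j)"
        by (simp add: vec_eq_iff Ht_def T_def)
      ultimately show ?thesis unfolding CR_def by simp
    qed
    have hh: "(\<chi> i j. h $ i $ j) = h" by (simp add: vec_eq_iff)
    have dh: "det h \<noteq> 0" using invh by (simp add: invertible_det_nz)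
    have "(CR \<longlongrightarrow> det (\<chi> i j. P i j) / det (\<chi> i j. h $ i $ j)) (at 0)"
      unfolding CR_def by (intro tendsto_divide det_tendsto) (simp add: hh dh)
    moreover have "CR 0 = det (\<chi> i j. P i j) / det (\<chi> i j. h $ i $ j)" by (simp add: CR_def)
    moreover have "CR 0 = M $ p $ q" using cr[OF I0] Mt0 by simp
    ultimately have "(CR \<longlongrightarrow> M $ p $ q) (at 0)" by simp
    moreover have ev: "eventually (\<lambda>t. Mt t $ p $ q = CR t) (at 0)"
      using evI by (rule eventually_mono) (rule cr)
    ultimately show ?thesis using tendsto_cong[OF ev] by simp
  qed
  have limQ: "((\<lambda>t. - ((Mt t ** g) ** M) $ a $ b) \<longlongrightarrow> - ((M ** g) ** M) $ a $ b) (at 0)"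
    unfolding matrix_matrix_mult_def by (simp only: vec_lambda_beta) (intro tendsto_intros cont)
  have "((\<lambda>t. Mt t $ a $ b) has_vector_derivative (- ((M ** g) ** M) $ a $ b)) (at 0)"
  proof (rule vd_factor[OF _ limQ])
    show "eventually (\<lambda>t. Mt t $ a $ b - Mt 0 $ a $ b = of_real t * (- ((Mt t ** g) ** M) $ a $ b)) (at 0)"
      using evI by (rule eventually_mono) (simp add: key Mt0)
  qed
  then show ?thesis unfolding Mt_def Ht_def T_def M_def .
qed



theorem lemma3p5:
  fixes \<omega> \<gamma> :: "('n::{finite,linorder}) form"
    and \<alpha> :: "real \<Rightarrow> 'n form"
    and p q :: nat and \<epsilon> :: real
  assumes "hermitian_metric \<omega>"
    and "real_11_form \<gamma>"
    and "\<epsilon> > 0"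
    and "\<forall>t\<in>{-\<epsilon><..<\<epsilon>}. hermitian_metric (form_add_smult \<omega> t \<gamma>)"
    and "\<forall>t\<in>{-\<epsilon><..<\<epsilon>}. bideg p q (\<alpha> t)"
    and "\<forall>A. smooth_on {-\<epsilon><..<\<epsilon>} (\<lambda>t. \<alpha> t A)"
  shows "\<forall>A. ((\<lambda>t. Lambda_op (form_add_smult \<omega> t \<gamma>) (\<alpha> t) A) has_vector_derivative
            (Lambda_op \<omega> (\<lambda>B. vector_derivative (\<lambda>t. \<alpha> t B) (at 0)) A
             - form_adj \<omega> (wedge \<gamma>) (\<alpha> 0) A)) (at 0)"
proof
  fix A :: "('n + 'n) set"
  note herm = assms(1) and g11 = assms(2) and eps = assms(3) and hermt = assms(4) and sm = assms(6)
  define h where "h = coef_mat \<omega>"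
  define g where "g = coef_mat \<gamma>"
  define M where "M = matrix_inv h"
  define I where "I = {-\<epsilon><..<\<epsilon>}"
  define Mt where "Mt = (\<lambda>t::real. matrix_inv (h + (\<chi> j k. of_real t * g $ j $ k)))"
  define \<alpha>' where "\<alpha>' = (\<lambda>B. vector_derivative (\<lambda>t. \<alpha> t B) (at 0))"
  define Y where "Y = (\<lambda>t j k. iota (Inr k) (iota (Inl j) (\<alpha> t)) A)"
  define Y' where "Y' = (\<lambda>j k. iota (Inr k) (iota (Inl j) \<alpha>') A)"
  define Md where "Md = - ((M ** g) ** M)"
  have I0: "0 \<in> I" using eps by (simp add: I_def)
  have Hform: "coef_mat (form_add_smult \<omega> t \<gamma>) = h + (\<chi> j k. of_real t * g $ j $ k)" for t
    by (simp add: vec_eq_iff coef_mat_def form_add_smult_def h_def g_def algebra_simps)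
  have z0: "(\<chi> j k. of_real 0 * g $ j $ k) = (0::complex ^ 'n::{finite,linorder} ^ 'n::{finite,linorder})" by (simp add: vec_eq_iff)
  have Mt0: "Mt 0 = M" unfolding Mt_def M_def z0 by simp
  have d\<alpha>: "((\<lambda>t. \<alpha> t B) has_vector_derivative \<alpha>' B) (at 0)" for B
  proof -
    obtain D where D0: "D 0 = (\<lambda>t. \<alpha> t B)" and D: "\<forall>k. \<forall>t\<in>I. (D k has_vector_derivative D (Suc k) t) (at t)"
      using sm unfolding smooth_on_def I_def by blast
    have "(D 0 has_vector_derivative D (Suc 0) 0) (at 0)" using D I0 by blast
    then have "((\<lambda>t. \<alpha> t B) has_vector_derivative D 1 0) (at 0)" using D0 by simp
    moreover then have "\<alpha>' B = D 1 0" unfolding \<alpha>'_def by (rule vector_derivative_at)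
    ultimately show ?thesis by simp
  qed
  have dY: "((\<lambda>t. Y t j k) has_vector_derivative Y' j k) (at 0)" for j k
    unfolding Y_def Y'_def by (rule iota2_deriv[OF d\<alpha>])
  have dM: "((\<lambda>t. Mt t $ j $ k) has_vector_derivative Md $ j $ k) (at 0)" for j k
  proof -
    have "invertible (h + (\<chi> j k. of_real t * g $ j $ k))" if "t \<in> {-\<epsilon><..<\<epsilon>}" for t
      using herm_invertible[OF hermt[rule_format, OF that]] by (simp add: Hform)
    from Minv_deriv[OF eps this] show ?thesis unfolding Mt_def Md_def M_def by simp
  qed
  define F where "F = (\<lambda>t. \<Sum>j\<in>UNIV. \<Sum>k\<in>UNIV. cnj (\<i> * Mt t $ j $ k) * Y t j k)"
  have dF: "(F has_vector_derivative
      (\<Sum>j\<in>UNIV. \<Sum>k\<in>UNIV. cnj (\<i> * Mt 0 $ j $ k) * Y' j k + cnj (\<i> * Md $ j $ k) * Y 0 j k)) (at 0)"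
    unfolding F_def
    by (intro has_vector_derivative_sum has_vector_derivative_mult has_vector_derivative_cnj
        has_vector_derivative_mult_right dM dY)
  have eqF: "Lambda_op (form_add_smult \<omega> t \<gamma>) (\<alpha> t) A = F t" if "t \<in> I" for t
    using Lambda_explicit[OF hermt[rule_format, OF that[unfolded I_def]]]
    unfolding F_def Y_def Mt_def Hform by simp
  have val: "(\<Sum>j\<in>UNIV. \<Sum>k\<in>UNIV. cnj (\<i> * Mt 0 $ j $ k) * Y' j k + cnj (\<i> * Md $ j $ k) * Y 0 j k)
      = Lambda_op \<omega> \<alpha>' A - form_adj \<omega> (wedge \<gamma>) (\<alpha> 0) A"
    unfolding Lambda_explicit[OF herm] adj_gamma_explicit[OF herm g11] Mt0
    unfolding Y_def Y'_def Md_def M_def h_def g_def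
    by (simp add: sum.distrib sum_subtractf[symmetric] algebra_simps)
  have "(F has_vector_derivative (Lambda_op \<omega> \<alpha>' A - form_adj \<omega> (wedge \<gamma>) (\<alpha> 0) A)) (at 0)"
    using dF unfolding val .
  then have "((\<lambda>t. Lambda_op (form_add_smult \<omega> t \<gamma>) (\<alpha> t) A) has_vector_derivative
      (Lambda_op \<omega> \<alpha>' A - form_adj \<omega> (wedge \<gamma>) (\<alpha> 0) A)) (at 0)"
    by (rule has_vector_derivative_transform_within_open[where S=I])
       (use eps in \<open>auto simp: I_def eqF[unfolded I_def]\<close>)
  then show "((\<lambda>t. Lambda_op (form_add_smult \<omega> t \<gamma>) (\<alpha> t) A) has_vector_derivative
            (Lambda_op \<omega> (\<lambda>B. vector_derivative (\<lambda>t. \<alpha> t B) (at 0)) A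
             - form_adj \<omega> (wedge \<gamma>) (\<alpha> 0) A)) (at 0)"
    unfolding \<alpha>'_def .
qed



end
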